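(* Let $q$ be a prime power, $m$ a positive integer with $\gcd(m,q)=1$, $\lambda\in\mathbb{F}_q^*$, and $R_\lambda=\mathbb{F}_q[x]/\langle x^m-\lambda\rangle$. Let $C$ and $D$ be $\lambda$-quasi-twisted codes over $\mathbb{F}_q$ of length $2m$ and index $2$ (viewed as $R_\lambda$-submodules of $R_\lambda^2$), with $C$ generated by $(g_{11}(x),g_{12}(x))$ and $(0,g_{22}(x))$, and $D$ generated by $(f_{11}(x),f_{12}(x))$ and $(0,f_{22}(x))$, where $g_{11}(x)\mid x^m-\lambda$, $g_{22}(x)\mid x^m-\lambda$, $\deg g_{12}(x)<\deg g_{22}(x)$, $g_{11}(x)g_{22}(x)\mid (x^m-\lambda)g_{12}(x)$, and likewise $f_{11}(x)\mid x^m-\lambda$, $f_{22}(x)\mid x^m-\lambda$, $\deg f_{12}(x)<\deg f_{22}(x)$, $f_{11}(x)f_{22}(x)\mid (x^m-\lambda)f_{12}(x)$. Let $g(x)=\gcd(g_{11}(x),g_{22}(x))$, $f(x)=\gcd(f_{11}(x),f_{22}(x))$, and write $g_{22}(x)=g(x)g_{22}'(x)$, $f_{22}(x)=f(x)f_{22}'(x)$. Then $(C,D)$ is a linear complementary pair of codes if and only if: (I) $\gcd(f_{11}(x),g_{11}(x))=1$; (II) $g(x)=\dfrac{x^m-\lambda}{\mathrm{lcm}(f_{11}(x),f_{22}(x))}$; (III) $f(x)=\dfrac{x^m-\lambda}{\mathrm{lcm}(g_{11}(x),g_{22}(x))}$; (IV) $\gcd\big(g_{22}'(x),f_{22}'(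x),\,g_{11}(x)f_{12}(x)-g_{12}(x)f_{11}(x)\big)=1$.
   Context: A pair $(C,D)$ of $\mathbb{F}_q$-linear codes of the same length $n$ is a linear complementary pair (LCP) of codes if $C\cap D=\{0\}$ and $C+D=\mathbb{F}_q^n$. For $\lambda\in\mathbb{F}_q^*$, $T_\lambda(x_0,\dots,x_{n-1})=(\lambda x_{n-1},x_0,\dots,x_{n-2})$; a linear code $C\subseteq\mathbb{F}_q^{2m}$ is $\lambda$-quasi-twisted of index $2$ if $T_\lambda^2(C)\subseteq C$, and it is identified with an $R_\lambda$-submodule of $R_\lambda^2$ via $(c_{0,0},c_{0,1},\dots,c_{m-1,0},c_{m-1,1})\mapsto(c_0(x),c_1(x))$, $c_j(x)=\sum_i c_{i,j}x^i$. gcd and lcm are monic. *)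

theory Defs
  imports "HOL-Computational_Algebra.Computational_Algebra"
begin

definition xml :: "nat \<Rightarrow> 'a::field \<Rightarrow> 'a poly" where
  "xml m lam = monom 1 m - [:lam:]"

text \<open>The R_lambda-submodule of R_lambda^2 generated by (a1,a2) and (0,b2);
  elements of R_lambda are represented by their reduced representatives mod x^m - lambda.\<close>
definition qt_module :: "nat \<Rightarrow> 'a::field \<Rightarrow> 'a poly \<Rightarrow> 'a poly \<Rightarrow> 'a poly \<Rightarrow> ('a poly \<times> 'a poly) set" where
  "qt_module m lam a1 a2 b2 =
     {((r * a1) mod xml m lam, (r * a2 + s * b2) mod xml m lam) | r s. True}"

text \<open>Identification (c0(x),c1(x)) with (c00,c01,c10,c11,...,c(m-1)0,c(m-1)1) in F_q^(2m).\<close>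
definition to_vec :: "nat \<Rightarrow> ('a::zero poly \<times> 'a poly) \<Rightarrow> 'a list" where
  "to_vec m c = map (\<lambda>k. coeff (if even k then fst c else snd c) (k div 2)) [0..<2*m]"

definition qt_code :: "nat \<Rightarrow> 'a::field \<Rightarrow> 'a poly \<Rightarrow> 'a poly \<Rightarrow> 'a poly \<Rightarrow> 'a list set" where
  "qt_code m lam a1 a2 b2 = to_vec m ` qt_module m lam a1 a2 b2"

definition is_LCP :: "nat \<Rightarrow> 'a::field list set \<Rightarrow> 'a list set \<Rightarrow> bool" where
  "is_LCP n C D \<longleftrightarrow> C \<inter> D = {replicate n 0} \<and>
     {map2 (+) u v | u v. u \<in> C \<and> v \<in> D} = {v. length v = n}"

end

theory Submission imports Defs begin

lemma of_nat_card_zero: "(of_nat (card (UNIV::'a::{finite,ring_1} set)) :: 'a) = 0"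
proof -
  have "(\<Sum>x\<in>(UNIV::'a set). x + 1) = (\<Sum>x\<in>UNIV. x)"
    by (rule sum.reindex_bij_witness[of _ "\<lambda>x. x - 1" "\<lambda>x. x + 1"]) auto
  then show ?thesis by (simp add: sum.distrib)
qed

lemma of_nat_coprime_card_nz:
  assumes "coprime m (card (UNIV::'a::{finite,field} set))"
  shows "(of_nat m :: 'a) \<noteq> 0"
proof
  assume "(of_nat m :: 'a) = 0"
  hence "CHAR('a) dvd m" by (simp add: of_nat_eq_0_iff_char_dvd)
  moreover have "CHAR('a) dvd card (UNIV::'a set)"
    using of_nat_card_zero[where 'a='a] by (simp add: of_nat_eq_0_iff_char_dvd)
  ultimately have "CHAR('a) dvd 1" using assms
    using coprime_common_divisor by blast
  thus False by simp
qed


lemma xml_degree: assumes "m > 0" shows "degree (xml m (lam::'a::field)) = m"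
proof -
  have "xml m lam = monom 1 m + [:-lam:]" by (simp add: xml_def)
  also have "degree \<dots> = m" using assms by (subst degree_add_eq_left) (auto simp: degree_monom_eq)
  finally show ?thesis .
qed

lemma xml_nz: assumes "m > 0" shows "xml m (lam::'a::field) \<noteq> 0"
  using xml_degree[OF assms, of lam] assms by auto

lemma xml_lead: assumes "m > 0" shows "lead_coeff (xml m (lam::'a::field)) = 1"
proof -
  have "coeff (xml m lam) m = 1" using assms by (cases m) (simp_all add: xml_def)
  thus ?thesis using xml_degree[OF assms, of lam] by simp
qed

lemma xml_normalize: assumes "m > 0" shows "normalize (xml m (lam::'a::field_gcd)) = xml m lam"
  using assms by (simp add: normalize_poly_eq_map_poly xml_lead)

lemma xml_squarefree:
  assumes "m > 0" "(of_nat m :: 'a::field_gcd) \<noteq> 0" "lam \<noteq> (0::'a)"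
  shows "squarefree (xml m lam)"
proof (rule squarefreeI)
  fix t :: "'a poly" assume "t ^ 2 dvd xml m lam"
  then obtain k where k: "xml m lam = t * (t * k)" unfolding power2_eq_square by (metis dvdE mult.assoc)
  have "pderiv (xml m lam) = monom (of_nat m) (m - 1)"
    by (simp add: xml_def pderiv_diff pderiv_monom pderiv_pCons)
  moreover have "pderiv (xml m lam) = t * (t * pderiv k + k * pderiv t) + t * k * pderiv t"
    unfolding k pderiv_mult by (simp add: algebra_simps)
  ultimately have "t dvd monom (of_nat m) (m - 1)" by (metis dvd_add dvd_triv_left mult.assoc)
  hence "t dvd smult (inverse (of_nat m)) (monom 1 1 * monom (of_nat m) (m - 1))"
    by (simp add: dvd_smult)
  also have "smult (inverse (of_nat m)) (monom 1 1 * monom (of_nat m) (m - 1)) = monom (1::'a) m"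
  proof -
    have "inverse (of_nat m :: 'a) * of_nat m = 1" using assms(2) by (rule left_inverse)
    thus ?thesis using assms(1) by (simp add: mult_monom smult_monom)
  qed
  finally have "t dvd monom 1 m" .
  moreover have "t dvd xml m lam" using k by simp
  ultimately have "t dvd monom 1 m - xml m lam" by (rule dvd_diff)
  hence "t dvd [:lam:]" by (simp add: xml_def)
  moreover have "is_unit [:lam:]" using assms by (simp add: is_unit_const_poly_iff dvd_field_iff)
  ultimately show "t dvd 1" using dvd_unit_imp_unit by blast
qed


lemma sq_cancel:
  fixes M :: "'a::factorial_semiring"
  assumes sq: "squarefree M" and tM: "t dvd M" and ttb: "t * t dvd M * b"
  shows "t dvd b"
proof (cases "b = 0")
  case True thus ?thesis by simp
next
  case False
  have M0: "M \<noteq> 0" using sq by auto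
  hence t0: "t \<noteq> 0" using tM by auto
  show ?thesis
  proof (rule multiplicity_le_imp_dvd[OF t0])
    fix p :: 'a assume p: "prime p"
    have "multiplicity p M \<le> 1" using sq M0 p squarefree_factorial_semiring'' by blast
    moreover have "multiplicity p t \<le> multiplicity p M" by (rule dvd_imp_multiplicity_le[OF tM M0])
    moreover have "multiplicity p (t * t) \<le> multiplicity p (M * b)"
      by (rule dvd_imp_multiplicity_le[OF ttb]) (use M0 False in simp)
    moreover have "multiplicity p (t * t) = multiplicity p t + multiplicity p t"
      using p t0 by (simp add: prime_elem_multiplicity_mult_distrib)
    moreover have "multiplicity p (M * b) = multiplicity p M + multiplicity p b"
      using p M0 False by (simp add: prime_elem_multiplicity_mult_distrib)
    ultimately show "multiplicity p t \<le> multiplicity p b" by linarith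
  qed
qed

lemma sq_dvd_primes:
  fixes M :: "'a::factorial_semiring"
  assumes sq: "squarefree M" and H: "\<And>p. prime p \<Longrightarrow> p dvd M \<Longrightarrow> p dvd x"
  shows "M dvd x"
proof (cases "x = 0")
  case True thus ?thesis by simp
next
  case False
  have M0: "M \<noteq> 0" using sq by auto
  show ?thesis
  proof (rule multiplicity_le_imp_dvd[OF M0])
    fix p :: 'a assume p: "prime p"
    have le1: "multiplicity p M \<le> 1" using sq M0 p squarefree_factorial_semiring'' by blast
    show "multiplicity p M \<le> multiplicity p x"
    proof (cases "p dvd M")
      case True
      hence "p dvd x" using H p by blast
      hence "multiplicity p x > 0" using p False by (simp add: prime_multiplicity_gt_zero_iff)
      thus ?thesis using le1 by linarith
    next
      case False
      thus ?thesis by (simp add: not_dvd_imp_multiplicity_0)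
    qed
  qed
qed


lemma degree_assoc:
  fixes p q :: "'a::field poly"
  assumes "p dvd q" "q dvd p" shows "degree p = degree q"
proof (cases "q = 0")
  case True thus ?thesis using assms by simp
next
  case False
  hence "p \<noteq> 0" using assms by auto
  thus ?thesis using assms False dvd_imp_degree_le by (metis le_antisym)
qed

lemma degree_normalize': "degree (normalize (p::'a::field_gcd poly)) = degree p"
  by (rule degree_assoc) simp_all

lemma degree_gcd_lcm:
  fixes a c :: "'a::field_gcd poly"
  assumes "a \<noteq> 0" "c \<noteq> 0"
  shows "degree (gcd a c) + degree (lcm a c) = degree a + degree c"
proof -
  have "degree (gcd a c * lcm a c) = degree (normalize a * normalize c)" by (simp only: gcd_mult_lcm)
  moreover have "gcd a c \<noteq> 0" "lcm a c \<noteq> 0" using assms by (auto simp: lcm_eq_0_iff)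
  moreover have "degree (gcd a c * lcm a c) = degree (gcd a c) + degree (lcm a c)"
    using calculation(2,3) by (rule degree_mult_eq)
  moreover have "degree (normalize a * normalize c) = degree a + degree c"
    using assms by (simp add: degree_mult_eq degree_normalize')
  ultimately show ?thesis by simp
qed

lemma eq_of_dvd_degree:
  fixes x y :: "'a::field_gcd poly"
  assumes "x dvd y" "y \<noteq> 0" "degree x = degree y" "normalize x = x" "normalize y = y"
  shows "x = y"
proof -
  obtain k where k: "y = x * k" using assms(1) by blast
  have "x \<noteq> 0" "k \<noteq> 0" using k assms(2) by auto
  hence "degree k = 0" using k assms(3) by (simp add: degree_mult_eq)
  hence "is_unit k" using \<open>k \<noteq> 0\<close> by (simp add: is_unit_iff_degree)
  hence "y dvd x" using k by (metis dvd_mult_unit_iff dvd_refl)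
  thus ?thesis using assms associated_eqI by blast
qed

lemma fwd_I:
  fixes M a d r u :: "'a::field_gcd poly"
  assumes aM: "a dvd M" and s1: "M dvd r*a + u*d - 1"
  shows "coprime a d"
proof (rule coprimeI)
  fix t assume ta: "t dvd a" and td: "t dvd d"
  have "t dvd M" using ta aM by (rule dvd_trans)
  hence "t dvd r*a + u*d - 1" using s1 by (rule dvd_trans)
  moreover have "t dvd r*a + u*d" using ta td by simp
  ultimately have "t dvd (r*a + u*d) - (r*a + u*d - 1)" by (rule dvd_diff[rotated])
  thus "is_unit t" by simp
qed

lemma fwd_K:
  fixes M a b c d e h r s u v :: "'a::field_gcd poly"
  assumes sq: "squarefree M" and aM: "a dvd M" and hg: "a * c dvd M * b" and cop: "coprime a d"
    and s1: "M dvd r*a + u*d" and s2: "M dvd r*b + s*c + u*e + v*h - 1"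
  shows "coprime (gcd a c) h"
proof (rule coprimeI)
  fix t assume tg: "t dvd gcd a c" and th: "t dvd h"
  have ta: "t dvd a" and tc: "t dvd c" using tg by (auto intro: dvd_trans)
  have tM: "t dvd M" using ta aM by (rule dvd_trans)
  have "t * t dvd a * c" using ta tc by (rule mult_dvd_mono)
  hence "t * t dvd M * b" using hg by (rule dvd_trans)
  hence tb: "t dvd b" using sq tM sq_cancel by blast
  have "t dvd r*a + u*d" using tM s1 by (rule dvd_trans)
  hence "t dvd u*d" using ta by (metis dvd_add_right_iff dvd_mult)
  moreover have "coprime t d" using ta cop coprime_divisors dvd_refl by blast
  ultimately have tu: "t dvd u" by (simp add: coprime_dvd_mult_left_iff)
  have "t dvd r*b + s*c + u*e + v*h - 1" using tM s2 by (rule dvd_trans)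
  moreover have "t dvd r*b + s*c + u*e + v*h" using tb tc tu th by simp
  ultimately have "t dvd (r*b + s*c + u*e + v*h) - (r*b + s*c + u*e + v*h - 1)" by (rule dvd_diff[rotated])
  thus "is_unit t" by simp
qed

lemma fwd_II:
  fixes M a c d h :: "'a::field_gcd poly"
  assumes M0: "M \<noteq> 0" and Mn: "normalize M = M"
    and aM: "a dvd M" and cM: "c dvd M" and dM: "d dvd M" and hM: "h dvd M"
    and c1: "coprime (gcd a c) d" and c2: "coprime (gcd a c) h"
    and c3: "coprime (gcd d h) a" and c4: "coprime (gcd d h) c"
    and deg: "degree a + degree c + degree d + degree h = 2 * degree M"
  shows "gcd a c = M div lcm d h \<and> gcd d h = M div lcm a c"
proof -
  have nz: "a \<noteq> 0" "c \<noteq> 0" "d \<noteq> 0" "h \<noteq> 0" using M0 aM cM dM hM by auto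
  have P1: "gcd a c * lcm d h dvd M"
  proof (rule divides_mult)
    show "gcd a c dvd M" using aM by (meson dvd_trans gcd_dvd1)
    show "lcm d h dvd M" using dM hM by simp
    have "coprime (gcd a c) (d * h)" using c1 c2 by simp
    moreover have "lcm d h dvd d * h" by (simp add: lcm_least)
    ultimately show "coprime (gcd a c) (lcm d h)" using coprime_divisors dvd_refl by blast
  qed
  have P2: "gcd d h * lcm a c dvd M"
  proof (rule divides_mult)
    show "gcd d h dvd M" using dM by (meson dvd_trans gcd_dvd1)
    show "lcm a c dvd M" using aM cM by simp
    have "coprime (gcd d h) (a * c)" using c3 c4 by simp
    moreover have "lcm a c dvd a * c" by (simp add: lcm_least)
    ultimately show "coprime (gcd d h) (lcm a c)" using coprime_divisors dvd_refl by blast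
  qed
  have g0: "gcd a c \<noteq> 0" "gcd d h \<noteq> 0" "lcm a c \<noteq> 0" "lcm d h \<noteq> 0" using nz by (auto simp: lcm_eq_0_iff)
  have D1: "degree (gcd a c) + degree (lcm d h) \<le> degree M"
    using dvd_imp_degree_le[OF P1 M0] g0 by (simp add: degree_mult_eq)
  have D2: "degree (gcd d h) + degree (lcm a c) \<le> degree M"
    using dvd_imp_degree_le[OF P2 M0] g0 by (simp add: degree_mult_eq)
  have E1: "degree (gcd a c) + degree (lcm a c) = degree a + degree c" using nz by (simp add: degree_gcd_lcm)
  have E2: "degree (gcd d h) + degree (lcm d h) = degree d + degree h" using nz by (simp add: degree_gcd_lcm)
  have Q1: "gcd a c * lcm d h = M"
    by (rule eq_of_dvd_degree[OF P1 M0]) (use D1 D2 E1 E2 deg g0 Mn in \<open>simp_all add: degree_mult_eq normalize_mult\<close>)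
  have Q2: "gcd d h * lcm a c = M"
    by (rule eq_of_dvd_degree[OF P2 M0]) (use D1 D2 E1 E2 deg g0 Mn in \<open>simp_all add: degree_mult_eq normalize_mult\<close>)
  show ?thesis using Q1 Q2 g0 by (metis nonzero_mult_div_cancel_right)
qed


lemma coprime_cofactor:
  fixes M a c :: "'a::field_gcd poly"
  assumes sq: "squarefree M" and cM: "c dvd M"
  shows "coprime (c div gcd a c) a"
proof (rule coprimeI)
  fix z assume z1: "z dvd c div gcd a c" and za: "z dvd a"
  have cc: "gcd a c * (c div gcd a c) = c" by simp
  hence zc: "z dvd c" using z1 by (metis dvd_mult dvd_mult_left dvd_trans dvd_refl)
  hence zg: "z dvd gcd a c" using za by simp
  have "z * z dvd gcd a c * (c div gcd a c)" using zg z1 by (rule mult_dvd_mono)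
  hence "z * z dvd M * 1" using cc cM by (metis dvd_trans mult_1_right)
  moreover have "z dvd M" using zc cM by (rule dvd_trans)
  ultimately have "z dvd 1" using sq sq_cancel by blast
  thus "is_unit z" .
qed

lemma fwd_IV:
  fixes M a b c d e h :: "'a::field_gcd poly"
  assumes sq: "squarefree M" and cM: "c dvd M" and hM: "h dvd M"
    and Int: "\<And>r s u v. r*a = u*d \<Longrightarrow> r*b + s*c = u*e + v*h \<Longrightarrow> M dvd r*a"
  shows "gcd (c div gcd a c) (gcd (h div gcd d h) (a*e - b*d)) = 1"
proof -
  define t where "t = gcd (c div gcd a c) (gcd (h div gcd d h) (a*e - b*d))"
  have tc': "t dvd c div gcd a c" and th': "t dvd h div gcd d h" and tw: "t dvd a*e - b*d"
    unfolding t_def by (auto intro: dvd_trans)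
  have "coprime (c div gcd a c) a" using sq cM by (rule coprime_cofactor)
  hence cta: "coprime t a" using tc' coprime_divisors dvd_refl by blast
  have "coprime (h div gcd d h) d" using sq hM by (rule coprime_cofactor)
  hence ctd: "coprime t d" using th' coprime_divisors dvd_refl by blast
  have "c div gcd a c dvd c" by (metis dvd_mult dvd_mult_div_cancel dvd_refl gcd_dvd2)
  hence tc: "t dvd c" using tc' by (rule dvd_trans[rotated])
  have "h div gcd d h dvd h" by (metis dvd_mult dvd_mult_div_cancel dvd_refl gcd_dvd2)
  hence th: "t dvd h" using th' by (rule dvd_trans[rotated])
  have tM: "t dvd M" using tc cM by (rule dvd_trans)
  define N where "N = M div t"
  have MN: "M = t * N" unfolding N_def using tM by simp
  have M0: "M \<noteq> 0" using sq by auto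
  hence N0: "N \<noteq> 0" using MN by auto
  define W where "W = gcd c h"
  define s0 where "s0 = fst (bezout_coefficients c h)"
  define v0 where "v0 = snd (bezout_coefficients c h)"
  have bz: "s0 * c + v0 * h = W" unfolding s0_def v0_def W_def by (rule bezout_coefficients_fst_snd)
  obtain w1 where w1: "a*e - b*d = t * w1" using tw by blast
  have "N * (a*e - b*d) = M * w1" using w1 MN by (simp add: ac_simps)
  moreover have "W dvd M" unfolding W_def using cM by (meson dvd_trans gcd_dvd1)
  ultimately have "W dvd N * (a*e - b*d)" by simp
  then obtain z where z: "N * (a*e - b*d) = W * z" by blast
  have e1: "(d*N) * a = (a*N) * d" by (simp add: ac_simps)
  have "(d*N)*b + (s0*z)*c - ((a*N)*e + (-(v0*z))*h) = z * (s0 * c + v0 * h) - N * (a*e - b*d)"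
    by (simp add: algebra_simps)
  also have "\<dots> = 0" using bz z by (simp add: ac_simps)
  finally have e2: "(d*N)*b + (s0*z)*c = (a*N)*e + (-(v0*z))*h" by simp
  have "M dvd (d*N)*a" using Int[OF e1 e2] .
  hence "t * N dvd (a*d) * N" using MN by (simp add: ac_simps)
  hence "t dvd a * d" using N0 by simp
  moreover have "coprime t (a * d)" using cta ctd by simp
  ultimately have "is_unit t" using coprime_common_divisor dvd_refl by blast
  thus ?thesis unfolding t_def by simp
qed


lemma local_case:
  fixes p a b c d e h r s u v :: "'a::field_gcd poly"
  assumes p: "prime p"
    and pI: "\<not>(p dvd a \<and> p dvd d)"
    and pII: "(p dvd a \<and> p dvd c) \<longleftrightarrow> \<not>(p dvd d \<or> p dvd h)"
    and pIII: "(p dvd d \<and> p dvd h) \<longleftrightarrow> \<not>(p dvd a \<or> p dvd c)"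
    and pIV: "p dvd c \<Longrightarrow> \<not> p dvd a \<Longrightarrow> p dvd h \<Longrightarrow> \<not> p dvd d \<Longrightarrow> \<not> p dvd (a*e - b*d)"
    and pb: "p dvd a \<Longrightarrow> p dvd c \<Longrightarrow> p dvd b"
    and pe: "p dvd d \<Longrightarrow> p dvd h \<Longrightarrow> p dvd e"
    and e1: "r*a = u*d" and e2: "r*b + s*c = u*e + v*h"
  shows "p dvd r*a \<and> p dvd r*b + s*c"
proof (cases "p dvd a")
  case pa: True
  show ?thesis
  proof (cases "p dvd c")
    case True thus ?thesis using pa pb by simp
  next
    case False
    hence nd: "\<not> p dvd d" and ph: "p dvd h" using pa pI pII by auto
    have "p dvd u*d" using pa e1[symmetric] by (metis dvd_mult)
    hence "p dvd u" using nd p by (simp add: prime_dvd_mult_iff)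
    hence "p dvd u*e + v*h" using ph by simp
    moreover have "p dvd r*a" using pa by simp
    ultimately show ?thesis using e2 by simp
  qed
next
  case na: False
  show ?thesis
  proof (cases "p dvd c")
    case False
    hence pd: "p dvd d" and ph: "p dvd h" using na pIII by auto
    hence "p dvd e" using pe by blast
    hence "p dvd u*d \<and> p dvd u*e + v*h" using pd ph by simp
    thus ?thesis using e1 e2 by simp
  next
    case pc: True
    show ?thesis
    proof (cases "p dvd d")
      case pd: True
      have "p dvd r*a" using pd e1 by simp
      hence "p dvd r" using na p by (simp add: prime_dvd_mult_iff)
      thus ?thesis using pc by simp
    next
      case nd: False
      hence ph: "p dvd h" using pII na by auto
      have nw: "\<not> p dvd (a*e - b*d)" using pIV pc na ph nd by blast
      have "r*b - u*e = v*h - s*c" using e2 by (simp add: algebra_simps)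
      hence "p dvd r*b - u*e" using ph pc by simp
      hence "p dvd d * (r*b - u*e)" by simp
      moreover have "d * (r*b - u*e) = - (r * (a*e - b*d))"
        using e1 by (simp add: algebra_simps)
      ultimately have "p dvd r * (a*e - b*d)" by simp
      hence "p dvd r" using nw p by (simp add: prime_dvd_mult_iff)
      thus ?thesis using pc by simp
    qed
  qed
qed


lemma prime_dvd_lcm_iff:
  fixes p d h :: "'a::field_gcd poly"
  assumes p: "prime p"
  shows "p dvd lcm d h \<longleftrightarrow> p dvd d \<or> p dvd h"
proof
  assume "p dvd lcm d h"
  moreover have "lcm d h dvd d * h" by (simp add: lcm_least)
  ultimately have "p dvd d * h" by (rule dvd_trans)
  thus "p dvd d \<or> p dvd h" using p by (simp add: prime_dvd_mult_iff)
next
  assume "p dvd d \<or> p dvd h"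
  thus "p dvd lcm d h" by (meson dvd_lcm1 dvd_lcm2 dvd_trans)
qed

lemma prime_split:
  fixes M a c d h p :: "'a::field_gcd poly"
  assumes sq: "squarefree M" and Q: "gcd a c * lcm d h = M" and p: "prime p" and pM: "p dvd M"
  shows "(p dvd a \<and> p dvd c) \<longleftrightarrow> \<not>(p dvd d \<or> p dvd h)"
proof -
  have "p dvd gcd a c * lcm d h" using Q pM by simp
  hence o: "p dvd gcd a c \<or> p dvd lcm d h" using p by (simp add: prime_dvd_mult_iff)
  have n: "\<not> (p dvd gcd a c \<and> p dvd lcm d h)"
  proof
    assume "p dvd gcd a c \<and> p dvd lcm d h"
    hence "p * p dvd M * 1" using Q by (metis mult_dvd_mono mult_1_right)
    hence "p dvd 1" using sq pM sq_cancel by blast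
    thus False using p by simp
  qed
  show ?thesis using o n prime_dvd_lcm_iff[OF p] by auto
qed

lemma prime_cofactor:
  fixes a c p :: "'a::field_gcd poly"
  assumes p: "prime p" and pc: "p dvd c" and na: "\<not> p dvd a"
  shows "p dvd c div gcd a c"
proof -
  have "gcd a c * (c div gcd a c) = c" by simp
  hence "p dvd gcd a c * (c div gcd a c)" using pc by simp
  moreover have "\<not> p dvd gcd a c" using na by (meson dvd_trans gcd_dvd1)
  ultimately show ?thesis using p prime_dvd_mult_iff by blast
qed

lemma bwd:
  fixes M a b c d e h :: "'a::field_gcd poly"
  assumes sq: "squarefree M"
    and aM: "a dvd M" and cM: "c dvd M" and dM: "d dvd M" and hM: "h dvd M"
    and hg: "a * c dvd M * b" and hf: "d * h dvd M * e"
    and I: "gcd d a = 1" and II: "gcd a c = M div lcm d h" and III: "gcd d h = M div lcm a c"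
    and IV: "gcd (c div gcd a c) (gcd (h div gcd d h) (a*e - b*d)) = 1"
  shows "(\<forall>r s u v. r*a = u*d \<and> r*b + s*c = u*e + v*h \<longrightarrow> M dvd r*a \<and> M dvd r*b + s*c)
     \<and> degree a + degree c + degree d + degree h = 2 * degree M"
proof
  have M0: "M \<noteq> 0" using sq by auto
  have nz: "a \<noteq> 0" "c \<noteq> 0" "d \<noteq> 0" "h \<noteq> 0" using M0 aM cM dM hM by auto
  have Q1: "gcd a c * lcm d h = M" using II dM hM by simp
  have Q2: "gcd d h * lcm a c = M" using III aM cM by simp
  have g0: "gcd a c \<noteq> 0" "gcd d h \<noteq> 0" "lcm a c \<noteq> 0" "lcm d h \<noteq> 0" using nz by (auto simp: lcm_eq_0_iff)
  have D1: "degree (gcd a c) + degree (lcm d h) = degree M" using Q1 g0 degree_mult_eq by metis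
  have D2: "degree (gcd d h) + degree (lcm a c) = degree M" using Q2 g0 degree_mult_eq by metis
  have E1: "degree (gcd a c) + degree (lcm a c) = degree a + degree c" using nz by (simp add: degree_gcd_lcm)
  have E2: "degree (gcd d h) + degree (lcm d h) = degree d + degree h" using nz by (simp add: degree_gcd_lcm)
  show "degree a + degree c + degree d + degree h = 2 * degree M" using D1 D2 E1 E2 by linarith
  show "\<forall>r s u v. r*a = u*d \<and> r*b + s*c = u*e + v*h \<longrightarrow> M dvd r*a \<and> M dvd r*b + s*c"
  proof (intro allI impI)
    fix r s u v assume eqs: "r*a = u*d \<and> r*b + s*c = u*e + v*h"
    have loc: "p dvd r*a \<and> p dvd r*b + s*c" if p: "prime p" and pM: "p dvd M" for p
    proof (rule local_case[OF p])
      show "\<not>(p dvd a \<and> p dvd d)"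
      proof
        assume "p dvd a \<and> p dvd d"
        hence "p dvd gcd d a" by simp
        thus False using I p by simp
      qed
      show "(p dvd a \<and> p dvd c) \<longleftrightarrow> \<not>(p dvd d \<or> p dvd h)" by (rule prime_split[OF sq Q1 p pM])
      show "(p dvd d \<and> p dvd h) \<longleftrightarrow> \<not>(p dvd a \<or> p dvd c)" by (rule prime_split[OF sq Q2 p pM])
      show "p dvd b" if "p dvd a" "p dvd c"
      proof -
        have "p * p dvd a * c" using that by (rule mult_dvd_mono)
        hence "p * p dvd M * b" using hg by (rule dvd_trans)
        thus ?thesis using sq pM sq_cancel by blast
      qed
      show "p dvd e" if "p dvd d" "p dvd h"
      proof -
        have "p * p dvd d * h" using that by (rule mult_dvd_mono)
        hence "p * p dvd M * e" using hf by (rule dvd_trans)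
        thus ?thesis using sq pM sq_cancel by blast
      qed
      show "\<not> p dvd (a*e - b*d)" if "p dvd c" "\<not> p dvd a" "p dvd h" "\<not> p dvd d"
      proof
        assume pw: "p dvd (a*e - b*d)"
        have "p dvd c div gcd a c" using prime_cofactor[OF p] that by blast
        moreover have "p dvd h div gcd d h" using prime_cofactor[OF p] that by blast
        ultimately have "p dvd gcd (c div gcd a c) (gcd (h div gcd d h) (a*e - b*d))" using pw by simp
        thus False using IV p by simp
      qed
      show "r*a = u*d" "r*b + s*c = u*e + v*h" using eqs by auto
    qed
    show "M dvd r*a \<and> M dvd r*b + s*c"
      using sq_dvd_primes[OF sq, of "r*a"] sq_dvd_primes[OF sq, of "r*b + s*c"] loc by blast
  qed
qed


definition Pd :: "nat \<Rightarrow> 'a::zero poly set" where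
  "Pd n = {p. \<forall>i\<ge>n. coeff p i = 0}"

lemma Pd_iff: "p \<in> Pd n \<longleftrightarrow> p = 0 \<or> degree p < n"
proof
  assume "p \<in> Pd n"
  hence H: "\<forall>i\<ge>n. coeff p i = 0" by (simp add: Pd_def)
  show "p = 0 \<or> degree p < n"
  proof (rule ccontr)
    assume "\<not> (p = 0 \<or> degree p < n)"
    hence "p \<noteq> 0" "degree p \<ge> n" by auto
    hence "coeff p (degree p) \<noteq> 0" by simp
    thus False using H \<open>degree p \<ge> n\<close> by blast
  qed
next
  assume "p = 0 \<or> degree p < n"
  thus "p \<in> Pd n" by (auto simp: Pd_def coeff_eq_0)
qed

lemma Pd_Suc: "Pd (Suc n) = (\<lambda>(c, p). pCons c p) ` (UNIV \<times> Pd n)"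
proof (intro set_eqI iffI)
  fix q :: "'a poly" assume q: "q \<in> Pd (Suc n)"
  obtain c p where qp: "q = pCons c p" by (cases q)
  have "p \<in> Pd n" unfolding Pd_def
  proof (intro CollectI allI impI)
    fix i assume "n \<le> i"
    hence "coeff q (Suc i) = 0" using q by (simp add: Pd_def)
    thus "coeff p i = 0" using qp by simp
  qed
  thus "q \<in> (\<lambda>(c, p). pCons c p) ` (UNIV \<times> Pd n)" using qp by auto
next
  fix q :: "'a poly" assume "q \<in> (\<lambda>(c, p). pCons c p) ` (UNIV \<times> Pd n)"
  then obtain c p where qp: "q = pCons c p" and p: "p \<in> Pd n" by auto
  show "q \<in> Pd (Suc n)" unfolding Pd_def
  proof (intro CollectI allI impI)
    fix i assume "Suc n \<le> i"
    then obtain j where "i = Suc j" "n \<le> j" by (cases i) auto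
    thus "coeff q i = 0" using qp p by (simp add: Pd_def)
  qed
qed

lemma card_Pd: "finite (Pd n :: 'a::{finite,zero} poly set) \<and> card (Pd n :: 'a poly set) = card (UNIV :: 'a set) ^ n"
proof (induction n)
  case 0
  have "Pd 0 = {0 :: 'a poly}" by (auto simp: Pd_iff)
  thus ?case by simp
next
  case (Suc n)
  have inj: "inj_on (\<lambda>(c, p). pCons c p) (UNIV \<times> (Pd n :: 'a poly set))"
    by (auto simp: inj_on_def)
  show ?case unfolding Pd_Suc using Suc inj
    by (simp add: card_image card_cartesian_product)
qed


lemma card_Pd_eq: "card (Pd n :: 'a::{finite,zero} poly set) = card (UNIV::'a set) ^ n"
  using card_Pd by blast

lemma finite_Pd: "finite (Pd n :: 'a::{finite,zero} poly set)"
  using card_Pd by blast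

definition qtm :: "'a::field poly \<Rightarrow> 'a poly \<Rightarrow> 'a poly \<Rightarrow> 'a poly \<Rightarrow> ('a poly \<times> 'a poly) set" where
  "qtm M a b c = {((r*a) mod M, (r*b + s*c) mod M) | r s. True}"

lemma qt_module_eq: "qt_module m lam a b c = qtm (xml m lam) a b c"
  by (simp add: qt_module_def qtm_def)

lemma small_mod:
  fixes p M :: "'a::field poly"
  assumes "p \<in> Pd (degree M)" shows "p mod M = p"
  using assms by (auto simp: Pd_iff mod_poly_less)

lemma mod_in_Pd:
  fixes x M :: "'a::field poly"
  assumes "M \<noteq> 0" shows "x mod M \<in> Pd (degree M)"
  using degree_mod_less[OF assms, of x] by (auto simp: Pd_iff)

lemma qtm_sub: "M \<noteq> 0 \<Longrightarrow> qtm M a b c \<subseteq> Pd (degree M) \<times> Pd (degree M)"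
  by (auto simp: qtm_def mod_in_Pd)

lemma dvd_small_zero:
  fixes z M :: "'a::field poly"
  assumes "M dvd z" "z \<in> Pd (degree M)" "M \<noteq> 0" shows "z = 0"
proof (rule ccontr)
  assume "z \<noteq> 0"
  hence "degree M \<le> degree z" using assms(1) dvd_imp_degree_le by blast
  moreover have "degree z < degree M" using assms(2) \<open>z \<noteq> 0\<close> by (simp add: Pd_iff)
  ultimately show False by simp
qed

lemma qtm_card:
  fixes M a b c :: "'a::{finite,field} poly"
  assumes M0: "M \<noteq> 0" and aM: "a dvd M" and cM: "c dvd M" and hg: "a * c dvd M * b"
  shows "card (qtm M a b c) = card (UNIV::'a set) ^ (degree M - degree a) * card (UNIV::'a set) ^ (degree M - degree c)"
proof -
  define A' where "A' = M div a"
  define C' where "C' = M div c"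
  have MA: "M = a * A'" unfolding A'_def using aM by simp
  have MC: "M = c * C'" unfolding C'_def using cM by simp
  have a0: "a \<noteq> 0" and A0: "A' \<noteq> 0" and c0: "c \<noteq> 0" and C0: "C' \<noteq> 0" using MA MC M0 by auto
  have dA: "degree A' = degree M - degree a" using MA a0 A0 by (simp add: degree_mult_eq)
  have dC: "degree C' = degree M - degree c" using MC c0 C0 by (simp add: degree_mult_eq)
  obtain wb where wb: "M * b = a * c * wb" using hg by blast
  have "a * (A' * b) = a * (c * wb)" using wb MA by (simp add: ac_simps)
  hence Ab: "A' * b = c * wb" using a0 by simp
  define phi where "phi = (\<lambda>(r, s). ((r*a) mod M, (r*b + s*c) mod M))"
  have img: "qtm M a b c = phi ` (Pd (degree A') \<times> Pd (degree C'))"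
  proof (intro set_eqI iffI)
    fix x assume "x \<in> qtm M a b c"
    then obtain r s where x: "x = ((r*a) mod M, (r*b + s*c) mod M)" by (auto simp: qtm_def)
    define k where "k = r div A'"
    define r0 where "r0 = r mod A'"
    define s1 where "s1 = s + k * wb"
    define j where "j = s1 div C'"
    define s0 where "s0 = s1 mod C'"
    have r: "r = k * A' + r0" unfolding k_def r0_def by simp
    have s1e: "s1 = j * C' + s0" unfolding j_def s0_def by simp
    have e1: "r*a - r0*a = k * M" using r MA by (simp add: algebra_simps)
    have "r*b + s*c = k*(A'*b) + r0*b + s*c" using r by (simp add: algebra_simps)
    also have "\<dots> = r0*b + s1*c" using Ab unfolding s1_def by (simp add: algebra_simps)
    also have "\<dots> = r0*b + s0*c + j*M" using s1e MC by (simp add: algebra_simps)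
    finally have e2: "(r*b + s*c) - (r0*b + s0*c) = j * M" by simp
    have "(r*a) mod M = (r0*a) mod M" using e1 by (simp add: mod_eq_dvd_iff)
    moreover have "(r*b + s*c) mod M = (r0*b + s0*c) mod M" using e2 by (simp add: mod_eq_dvd_iff)
    moreover have "r0 \<in> Pd (degree A')" unfolding r0_def using mod_in_Pd[OF A0] .
    moreover have "s0 \<in> Pd (degree C')" unfolding s0_def using mod_in_Pd[OF C0] .
    ultimately show "x \<in> phi ` (Pd (degree A') \<times> Pd (degree C'))"
      unfolding x phi_def by (auto intro!: image_eqI[where x="(r0, s0)"])
  next
    fix x assume "x \<in> phi ` (Pd (degree A') \<times> Pd (degree C'))"
    then obtain r s where "x = phi (r, s)" by auto
    thus "x \<in> qtm M a b c" by (auto simp: phi_def qtm_def)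
  qed
  have inj: "inj_on phi (Pd (degree A') \<times> Pd (degree C'))"
  proof (rule inj_onI, clarify)
    fix r0 s0 r1 s1 assume r0: "r0 \<in> Pd (degree A')" and s0: "s0 \<in> Pd (degree C')"
      and r1: "r1 \<in> Pd (degree A')" and s1: "s1 \<in> Pd (degree C')"
      and eq: "phi (r0, s0) = phi (r1, s1)"
    have small: "x * y \<in> Pd (degree M)" if "x \<in> Pd (degree M - degree y)" "y dvd M" for x y
    proof -
      have y0: "y \<noteq> 0" using that(2) M0 by auto
      have "degree y \<le> degree M" using that(2) M0 dvd_imp_degree_le by blast
      show ?thesis
      proof (cases "x = 0")
        case False
        hence "degree (x * y) = degree x + degree y" using y0 by (simp add: degree_mult_eq)
        thus ?thesis using that(1) False \<open>degree y \<le> degree M\<close> by (auto simp: Pd_iff)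
      qed (simp add: Pd_iff)
    qed
    have "(r0*a) mod M = (r1*a) mod M" using eq by (simp add: phi_def)
    moreover have "(r0*a) mod M = r0*a" "(r1*a) mod M = r1*a"
      using small[of r0 a] small[of r1 a] r0 r1 dA aM by (simp_all add: small_mod)
    ultimately have "r0 * a = r1 * a" by simp
    hence rr: "r0 = r1" using a0 by simp
    have "(r0*b + s0*c) mod M = (r0*b + s1*c) mod M" using eq rr by (simp add: phi_def)
    hence "M dvd (r0*b + s0*c) - (r0*b + s1*c)" by (simp add: mod_eq_dvd_iff)
    hence "M dvd s0*c - s1*c" by simp
    moreover have "s0*c - s1*c \<in> Pd (degree M)"
    proof -
      have "s0 - s1 \<in> Pd (degree C')" using s0 s1 by (auto simp: Pd_def)
      hence "(s0 - s1) * c \<in> Pd (degree M)" using small[of "s0 - s1" c] dC cM by simp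
      thus ?thesis by (simp add: algebra_simps)
    qed
    ultimately have "s0*c - s1*c = 0" using dvd_small_zero M0 by blast
    hence "s0 = s1" using c0 by simp
    thus "r0 = r1 \<and> s0 = s1" using rr by simp
  qed
  have "card (qtm M a b c) = card (Pd (degree A') \<times> Pd (degree C') :: ('a poly \<times> 'a poly) set)"
    unfolding img using inj by (rule card_image)
  also have "\<dots> = card (UNIV::'a set) ^ (degree M - degree a) * card (UNIV::'a set) ^ (degree M - degree c)"
    using dA dC by (simp add: card_cartesian_product card_Pd_eq)
  finally show ?thesis .
qed


lemma qtm_zero: "(0, 0) \<in> qtm M a b c"
  unfolding qtm_def by (auto intro!: exI[of _ 0])

lemma qtm_diff:
  assumes "x \<in> qtm M a b c" "y \<in> qtm M a b c"
  shows "(fst x - fst y, snd x - snd y) \<in> qtm M a b c"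
proof -
  obtain r1 s1 where x: "x = ((r1*a) mod M, (r1*b + s1*c) mod M)" using assms(1) by (auto simp: qtm_def)
  obtain r2 s2 where y: "y = ((r2*a) mod M, (r2*b + s2*c) mod M)" using assms(2) by (auto simp: qtm_def)
  have "(fst x - fst y, snd x - snd y) = (((r1 - r2)*a) mod M, ((r1 - r2)*b + (s1 - s2)*c) mod M)"
    unfolding x y by (simp add: poly_mod_diff_left[symmetric] algebra_simps)
  thus ?thesis unfolding qtm_def by blast
qed

definition Splus :: "('a::plus \<times> 'a) set \<Rightarrow> ('a \<times> 'a) set \<Rightarrow> ('a \<times> 'a) set" where
  "Splus A B = {(fst x + fst y, snd x + snd y) | x y. x \<in> A \<and> y \<in> B}"

lemma card_Splus:
  fixes A B :: "('a::ab_group_add \<times> 'a) set"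
  assumes fA: "finite A" and fB: "finite B" and AB: "A \<inter> B = {(0, 0)}"
    and cA: "\<And>x y. x \<in> A \<Longrightarrow> y \<in> A \<Longrightarrow> (fst x - fst y, snd x - snd y) \<in> A"
    and cB: "\<And>x y. x \<in> B \<Longrightarrow> y \<in> B \<Longrightarrow> (fst x - fst y, snd x - snd y) \<in> B"
  shows "card (Splus A B) = card A * card B"
proof -
  define f where "f = (\<lambda>(x::'a \<times> 'a, y::'a \<times> 'a). (fst x + fst y, snd x + snd y))"
  have img: "Splus A B = f ` (A \<times> B)"
  proof (intro set_eqI iffI)
    fix w assume "w \<in> Splus A B"
    then obtain x y where "x \<in> A" "y \<in> B" "w = (fst x + fst y, snd x + snd y)" unfolding Splus_def by blast
    thus "w \<in> f ` (A \<times> B)" unfolding f_def by (intro image_eqI[where x="(x, y)"]) auto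
  next
    fix w assume "w \<in> f ` (A \<times> B)"
    then obtain x y where "x \<in> A" "y \<in> B" "w = f (x, y)" by blast
    moreover hence "w = (fst x + fst y, snd x + snd y)" unfolding f_def by simp
    ultimately show "w \<in> Splus A B" unfolding Splus_def by blast
  qed
  have "inj_on f (A \<times> B)"
  proof (rule inj_onI, clarify)
    fix x1 y1 x2 y2 assume x1: "x1 \<in> A" and y1: "y1 \<in> B" and x2: "x2 \<in> A" and y2: "y2 \<in> B"
      and eq: "f (x1, y1) = f (x2, y2)"
    have e1: "fst x1 - fst x2 = fst y2 - fst y1" and e2: "snd x1 - snd x2 = snd y2 - snd y1"
      using eq by (auto simp: f_def algebra_simps)
    have "(fst x1 - fst x2, snd x1 - snd x2) \<in> A" using cA x1 x2 by blast
    moreover have "(fst x1 - fst x2, snd x1 - snd x2) \<in> B" using cB[OF y2 y1] e1 e2 by simp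
    ultimately have "(fst x1 - fst x2, snd x1 - snd x2) = (0, 0)" using AB by blast
    hence "x1 = x2" "y1 = y2" using e1 e2 by (auto simp: prod_eq_iff)
    thus "x1 = x2 \<and> y1 = y2" by simp
  qed
  hence "card (Splus A B) = card (A \<times> B)" unfolding img by (rule card_image)
  thus ?thesis by (simp add: card_cartesian_product)
qed

lemma to_vec_nth:
  "k < 2*m \<Longrightarrow> to_vec m c ! k = coeff (if even k then fst c else snd c) (k div 2)"
  by (simp add: to_vec_def)

lemma length_to_vec [simp]: "length (to_vec m c) = 2*m"
  by (simp add: to_vec_def)

lemma to_vec_inj: "inj_on (to_vec m) (Pd m \<times> Pd m)"
proof (rule inj_onI, clarify)
  fix x y x' y' :: "'a poly"
  assume H: "x \<in> Pd m" "y \<in> Pd m" "x' \<in> Pd m" "y' \<in> Pd m" and eq: "to_vec m (x, y) = to_vec m (x', y')"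
  have cx: "coeff x i = coeff x' i" for i
  proof (cases "i < m")
    case True
    hence "to_vec m (x, y) ! (2*i) = to_vec m (x', y') ! (2*i)" using eq by simp
    thus ?thesis using True by (simp add: to_vec_nth)
  next
    case False thus ?thesis using H by (simp add: Pd_def)
  qed
  have cy: "coeff y i = coeff y' i" for i
  proof (cases "i < m")
    case True
    hence "to_vec m (x, y) ! (2*i+1) = to_vec m (x', y') ! (2*i+1)" using eq by simp
    thus ?thesis using True by (simp add: to_vec_nth)
  next
    case False thus ?thesis using H by (simp add: Pd_def)
  qed
  show "x = x' \<and> y = y'" using cx cy by (simp add: poly_eqI)
qed

lemma to_vec_add:
  "to_vec m (x1 + x2, y1 + y2) = map2 (+) (to_vec m (x1, y1)) (to_vec m (x2, y2))"
  by (rule nth_equalityI) (simp_all add: to_vec_nth)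

lemma to_vec_zero: "to_vec m (0, 0) = replicate (2*m) 0"
  by (rule nth_equalityI) (simp_all add: to_vec_nth)

lemma Pd_add: "x \<in> Pd n \<Longrightarrow> y \<in> Pd n \<Longrightarrow> x + y \<in> Pd n"
  by (simp add: Pd_def)

lemma to_vec_img:
  "to_vec m ` (Pd m \<times> Pd m) = {v :: 'a::{finite,zero} list. length v = 2*m}"
proof (rule card_subset_eq)
  have "{v :: 'a list. length v = 2*m} = {xs. set xs \<subseteq> UNIV \<and> length xs = 2*m}" by simp
  hence cl: "card {v :: 'a list. length v = 2*m} = card (UNIV::'a set) ^ (2*m)"
    by (simp only: card_lists_length_eq finite)
  show "finite {v :: 'a list. length v = 2*m}" using finite_lists_length_eq[of "UNIV::'a set" "2*m"] by simp
  show "to_vec m ` (Pd m \<times> Pd m) \<subseteq> {v. length v = 2*m}" by auto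
  have "card (to_vec m ` (Pd m \<times> Pd m :: ('a poly \<times> 'a poly) set)) = card (Pd m \<times> Pd m :: ('a poly \<times> 'a poly) set)"
    using to_vec_inj[of m] by (rule card_image)
  also have "\<dots> = card (UNIV::'a set) ^ (2*m)"
    by (simp add: card_cartesian_product card_Pd_eq power_add[symmetric] mult_2)
  finally show "card (to_vec m ` (Pd m \<times> Pd m :: ('a poly \<times> 'a poly) set)) = card {v :: 'a list. length v = 2*m}" using cl by simp
qed

lemma LCP_iff:
  fixes A B :: "('a::{finite,field} poly \<times> 'a poly) set"
  assumes As: "A \<subseteq> Pd m \<times> Pd m" and Bs: "B \<subseteq> Pd m \<times> Pd m"
  shows "is_LCP (2*m) (to_vec m ` A) (to_vec m ` B) \<longleftrightarrow> A \<inter> B = {(0, 0)} \<and> Splus A B = Pd m \<times> Pd m"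
proof -
  have z: "(0, 0) \<in> Pd m \<times> (Pd m :: 'a poly set)" by (simp add: Pd_def)
  have i1: "to_vec m ` A \<inter> to_vec m ` B = to_vec m ` (A \<inter> B)"
    using inj_on_image_Int[OF to_vec_inj As Bs] by simp
  have i2: "{replicate (2*m) (0::'a)} = to_vec m ` {(0, 0)}" by (simp add: to_vec_zero)
  have p1: "(to_vec m ` A \<inter> to_vec m ` B = {replicate (2*m) 0}) \<longleftrightarrow> A \<inter> B = {(0, 0)}"
    unfolding i1 i2 by (rule inj_on_image_eq_iff[OF to_vec_inj]) (use As z in auto)
  have Ss: "Splus A B \<subseteq> Pd m \<times> Pd m"
  proof
    fix w assume "w \<in> Splus A B"
    then obtain x y where "x \<in> A" "y \<in> B" "w = (fst x + fst y, snd x + snd y)" unfolding Splus_def by blast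
    moreover have "fst x \<in> Pd m" "snd x \<in> Pd m" using As \<open>x \<in> A\<close> by (auto simp: mem_Times_iff)
    moreover have "fst y \<in> Pd m" "snd y \<in> Pd m" using Bs \<open>y \<in> B\<close> by (auto simp: mem_Times_iff)
    ultimately show "w \<in> Pd m \<times> Pd m" by (simp add: Pd_add)
  qed
  have i3: "{map2 (+) u v | u v. u \<in> to_vec m ` A \<and> v \<in> to_vec m ` B} = to_vec m ` Splus A B"
  proof (intro set_eqI iffI)
    fix w assume "w \<in> {map2 (+) u v | u v. u \<in> to_vec m ` A \<and> v \<in> to_vec m ` B}"
    then obtain x y where "x \<in> A" "y \<in> B" "w = map2 (+) (to_vec m x) (to_vec m y)" by blast
    moreover have "map2 (+) (to_vec m x) (to_vec m y) = to_vec m (fst x + fst y, snd x + snd y)"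
      using to_vec_add[of m "fst x" "fst y" "snd x" "snd y"] by simp
    ultimately show "w \<in> to_vec m ` Splus A B" unfolding Splus_def by blast
  next
    fix w assume "w \<in> to_vec m ` Splus A B"
    then obtain x y where "x \<in> A" "y \<in> B" "w = to_vec m (fst x + fst y, snd x + snd y)"
      unfolding Splus_def by blast
    moreover have "map2 (+) (to_vec m x) (to_vec m y) = to_vec m (fst x + fst y, snd x + snd y)"
      using to_vec_add[of m "fst x" "fst y" "snd x" "snd y"] by simp
    moreover have "to_vec m x \<in> to_vec m ` A" "to_vec m y \<in> to_vec m ` B" using \<open>x \<in> A\<close> \<open>y \<in> B\<close> by auto
    ultimately show "w \<in> {map2 (+) u v | u v. u \<in> to_vec m ` A \<and> v \<in> to_vec m ` B}" by (metis (mono_tags, lifting) CollectI)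
  qed
  have p2: "({map2 (+) u v | u v. u \<in> to_vec m ` A \<and> v \<in> to_vec m ` B} = {v. length v = 2*m})
      \<longleftrightarrow> Splus A B = Pd m \<times> Pd m"
    unfolding i3 to_vec_img[symmetric] by (rule inj_on_image_eq_iff[OF to_vec_inj Ss]) simp
  show ?thesis unfolding is_LCP_def p1 p2 ..
qed


lemma qtm_shift:
  fixes M d e h u v k j :: "'a::field poly"
  assumes M0: "M \<noteq> 0" and dM: "d dvd M" and hM: "h dvd M" and hf: "d * h dvd M * e"
  shows "\<exists>u' v'. u'*d = u*d + k*M \<and> u'*e + v'*h = u*e + v*h + j*M"
proof -
  define D' where "D' = M div d"
  define H' where "H' = M div h"
  have MD: "M = d * D'" unfolding D'_def using dM by simp
  have MH: "M = h * H'" unfolding H'_def using hM by simp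
  have d0: "d \<noteq> 0" using MD M0 by auto
  obtain we where we: "M * e = d * h * we" using hf by blast
  have "d * (D' * e) = d * (h * we)" using we MD by (simp add: ac_simps)
  hence De: "D' * e = h * we" using d0 by simp
  define u' where "u' = u + k * D'"
  define v' where "v' = v - k * we + j * H'"
  have "u'*d = u*d + k*M" unfolding u'_def using MD by (simp add: algebra_simps)
  moreover have "u'*e + v'*h = u*e + v*h + j*M"
  proof -
    have "u'*e + v'*h = u*e + k*(D'*e) + v*h - k*we*h + j*(h*H')"
      unfolding u'_def v'_def by (simp add: algebra_simps)
    also have "\<dots> = u*e + v*h + j*M" using De MH by (simp add: algebra_simps)
    finally show ?thesis .
  qed
  ultimately show ?thesis by blast
qed

lemma int_from_AB:
  fixes M a b c d e h r s u v :: "'a::field poly"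
  assumes AB: "qtm M a b c \<inter> qtm M d e h = {(0, 0)}"
    and e1: "r*a = u*d" and e2: "r*b + s*c = u*e + v*h"
  shows "M dvd r*a \<and> M dvd r*b + s*c"
proof -
  have "((r*a) mod M, (r*b + s*c) mod M) \<in> qtm M a b c" unfolding qtm_def by blast
  moreover have "((r*a) mod M, (r*b + s*c) mod M) \<in> qtm M d e h" unfolding qtm_def e1 e2 by blast
  ultimately have "((r*a) mod M, (r*b + s*c) mod M) = (0, 0)" using AB by blast
  thus ?thesis by (simp add: dvd_eq_mod_eq_0)
qed

lemma AB_from_int:
  fixes M a b c d e h :: "'a::field poly"
  assumes M0: "M \<noteq> 0" and dM: "d dvd M" and hM: "h dvd M" and hf: "d * h dvd M * e"
    and Int: "\<forall>r s u v. r*a = u*d \<and> r*b + s*c = u*e + v*h \<longrightarrow> M dvd r*a \<and> M dvd r*b + s*c"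
  shows "qtm M a b c \<inter> qtm M d e h = {(0, 0)}"
proof
  show "{(0, 0)} \<subseteq> qtm M a b c \<inter> qtm M d e h" by (simp add: qtm_zero)
  show "qtm M a b c \<inter> qtm M d e h \<subseteq> {(0, 0)}"
  proof
    fix x assume "x \<in> qtm M a b c \<inter> qtm M d e h"
    then obtain r s u v where x1: "x = ((r*a) mod M, (r*b + s*c) mod M)"
      and x2: "x = ((u*d) mod M, (u*e + v*h) mod M)" unfolding qtm_def by blast
    have "(r*a) mod M = (u*d) mod M" using x1 x2 by simp
    hence "M dvd r*a - u*d" by (simp only: mod_eq_dvd_iff)
    then obtain k where k: "r*a - u*d = k*M" by (metis dvd_def mult.commute)
    have "(r*b + s*c) mod M = (u*e + v*h) mod M" using x1 x2 by simp
    hence "M dvd (r*b + s*c) - (u*e + v*h)" by (simp only: mod_eq_dvd_iff)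
    then obtain j where j: "(r*b + s*c) - (u*e + v*h) = j*M" by (metis dvd_def mult.commute)
    obtain u' v' where uv: "u'*d = u*d + k*M" "u'*e + v'*h = u*e + v*h + j*M"
      using qtm_shift[OF M0 dM hM hf] by blast
    have "r*a = u'*d" using uv k by (simp add: algebra_simps)
    moreover have "r*b + s*c = u'*e + v'*h" using uv j by (simp add: algebra_simps)
    ultimately have "M dvd r*a \<and> M dvd r*b + s*c" using Int by blast
    thus "x \<in> {(0, 0)}" using x1 by (simp add: dvd_eq_mod_eq_0)
  qed
qed

lemma sum_extract:
  fixes M a b c d e h p q :: "'a::field poly"
  assumes "(p, q) \<in> Splus (qtm M a b c) (qtm M d e h)"
  shows "\<exists>r s u v. M dvd r*a + u*d - p \<and> M dvd r*b + s*c + u*e + v*h - q"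
proof -
  obtain x y where x: "x \<in> qtm M a b c" and y: "y \<in> qtm M d e h"
    and pq: "(p, q) = (fst x + fst y, snd x + snd y)" using assms unfolding Splus_def by blast
  obtain r s where x1: "x = ((r*a) mod M, (r*b + s*c) mod M)" using x unfolding qtm_def by blast
  obtain u v where y1: "y = ((u*d) mod M, (u*e + v*h) mod M)" using y unfolding qtm_def by blast
  have "r*a + u*d - p = (r*a - (r*a) mod M) + (u*d - (u*d) mod M)" using pq x1 y1 by simp
  hence "M dvd r*a + u*d - p" by (metis dvd_add dvd_minus_mod)
  moreover have "r*b + s*c + u*e + v*h - q = ((r*b + s*c) - (r*b + s*c) mod M) + ((u*e + v*h) - (u*e + v*h) mod M)"
    using pq x1 y1 by (simp add: algebra_simps)
  hence "M dvd r*b + s*c + u*e + v*h - q" by (metis dvd_add dvd_minus_mod)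
  ultimately show ?thesis by blast
qed


lemma card_ge2: "1 < card (UNIV :: 'a::{finite,field} set)"
proof -
  have "card {0::'a, 1} = 2" by simp
  moreover have "card {0::'a, 1} \<le> card (UNIV::'a set)" by (rule card_mono) simp_all
  ultimately show ?thesis by simp
qed

lemma card_criterion:
  fixes M a b c d e h :: "'a::{finite,field} poly"
  assumes M0: "M \<noteq> 0"
    and aM: "a dvd M" and cM: "c dvd M" and dM: "d dvd M" and hM: "h dvd M"
    and hg: "a * c dvd M * b" and hf: "d * h dvd M * e"
    and AB: "qtm M a b c \<inter> qtm M d e h = {(0, 0)}"
  shows "Splus (qtm M a b c) (qtm M d e h) = Pd (degree M) \<times> Pd (degree M) \<longleftrightarrow>
         degree a + degree c + degree d + degree h = 2 * degree M"
proof -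
  define n where "n = degree M"
  define Q where "Q = card (UNIV::'a set)"
  have Q1: "1 < Q" unfolding Q_def by (rule card_ge2)
  have dle: "degree a \<le> n" "degree c \<le> n" "degree d \<le> n" "degree h \<le> n"
    unfolding n_def using M0 aM cM dM hM dvd_imp_degree_le by blast+
  have fV: "finite (Pd n \<times> Pd n :: ('a poly \<times> 'a poly) set)" by (simp add: finite_Pd)
  have As: "qtm M a b c \<subseteq> Pd n \<times> Pd n" and Bs: "qtm M d e h \<subseteq> Pd n \<times> Pd n"
    unfolding n_def using qtm_sub[OF M0] by blast+
  have cS: "card (Splus (qtm M a b c) (qtm M d e h)) = card (qtm M a b c) * card (qtm M d e h)"
    by (rule card_Splus[OF finite_subset[OF As fV] finite_subset[OF Bs fV] AB qtm_diff qtm_diff])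
  have Ss: "Splus (qtm M a b c) (qtm M d e h) \<subseteq> Pd n \<times> Pd n"
  proof
    fix w assume "w \<in> Splus (qtm M a b c) (qtm M d e h)"
    then obtain x y where "x \<in> qtm M a b c" "y \<in> qtm M d e h" "w = (fst x + fst y, snd x + snd y)"
      unfolding Splus_def by blast
    moreover have "fst x \<in> Pd n" "snd x \<in> Pd n" using As \<open>x \<in> qtm M a b c\<close> by (auto simp: mem_Times_iff)
    moreover have "fst y \<in> Pd n" "snd y \<in> Pd n" using Bs \<open>y \<in> qtm M d e h\<close> by (auto simp: mem_Times_iff)
    ultimately show "w \<in> Pd n \<times> Pd n" by (simp add: Pd_add)
  qed
  have cV: "card (Pd n \<times> Pd n :: ('a poly \<times> 'a poly) set) = Q ^ (n + n)"
    unfolding Q_def by (simp add: card_cartesian_product card_Pd_eq power_add)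
  have cAB: "card (qtm M a b c) * card (qtm M d e h) = Q ^ ((n - degree a) + (n - degree c) + (n - degree d) + (n - degree h))"
    unfolding Q_def n_def using qtm_card[OF M0 aM cM hg] qtm_card[OF M0 dM hM hf] by (simp add: power_add)
  have "Splus (qtm M a b c) (qtm M d e h) = Pd n \<times> Pd n \<longleftrightarrow>
        card (Splus (qtm M a b c) (qtm M d e h)) = card (Pd n \<times> Pd n :: ('a poly \<times> 'a poly) set)"
    using card_subset_eq[OF fV Ss] by auto
  also have "\<dots> \<longleftrightarrow> (n - degree a) + (n - degree c) + (n - degree d) + (n - degree h) = n + n"
    unfolding cS cAB cV using Q1 by simp
  also have "\<dots> \<longleftrightarrow> degree a + degree c + degree d + degree h = 2 * n" using dle by linarith
  finally show ?thesis unfolding n_def .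
qed

theorem theorem5p3:
  fixes lam :: "'a::{finite,field_gcd}"
    and m :: nat
    and g11 g12 g22 f11 f12 f22 :: "'a poly"
  assumes m_pos: "m > 0"
    and coprime_mq: "coprime m (card (UNIV :: 'a set))"
    and lam_nz: "lam \<noteq> 0"
    and hg11: "g11 dvd xml m lam" and hg22: "g22 dvd xml m lam"
    and hg12: "g12 = 0 \<or> degree g12 < degree g22"
    and hg: "g11 * g22 dvd xml m lam * g12"
    and hf11: "f11 dvd xml m lam" and hf22: "f22 dvd xml m lam"
    and hf12: "f12 = 0 \<or> degree f12 < degree f22"
    and hf: "f11 * f22 dvd xml m lam * f12"
  shows "is_LCP (2*m) (qt_code m lam g11 g12 g22) (qt_code m lam f11 f12 f22) \<longleftrightarrow>
    (let g = gcd g11 g22; f = gcd f11 f22; g22' = g22 div g; f22' = f22 div f in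
      gcd f11 g11 = 1 \<and>
      g = xml m lam div lcm f11 f22 \<and>
      f = xml m lam div lcm g11 g22 \<and>
      gcd g22' (gcd f22' (g11 * f12 - g12 * f11)) = 1)"
proof -
  define M where "M = xml m lam"
  have M0: "M \<noteq> 0" unfolding M_def using m_pos by (rule xml_nz)
  have Mn: "normalize M = M" unfolding M_def using m_pos by (rule xml_normalize)
  have dM: "degree M = m" unfolding M_def using m_pos by (rule xml_degree)
  have sq: "squarefree M" unfolding M_def
    using xml_squarefree[OF m_pos of_nat_coprime_card_nz[OF coprime_mq] lam_nz] .
  note h = hg11[folded M_def] hg22[folded M_def] hg[folded M_def] hf11[folded M_def] hf22[folded M_def] hf[folded M_def]
  define A where "A = qtm M g11 g12 g22"
  define B where "B = qtm M f11 f12 f22"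
  have As: "A \<subseteq> Pd m \<times> Pd m" unfolding A_def using qtm_sub[OF M0] dM by blast
  have Bs: "B \<subseteq> Pd m \<times> Pd m" unfolding B_def using qtm_sub[OF M0] dM by blast
  have LCP: "is_LCP (2*m) (qt_code m lam g11 g12 g22) (qt_code m lam f11 f12 f22) \<longleftrightarrow>
      A \<inter> B = {(0, 0)} \<and> Splus A B = Pd m \<times> Pd m"
    unfolding qt_code_def qt_module_eq M_def[symmetric] A_def[symmetric] B_def[symmetric]
    by (rule LCP_iff[OF As Bs])
  have crit: "A \<inter> B = {(0, 0)} \<Longrightarrow> Splus A B = Pd m \<times> Pd m \<longleftrightarrow>
      degree g11 + degree g22 + degree f11 + degree f22 = 2 * m"
    unfolding A_def B_def using card_criterion[OF M0 h(1) h(2) h(4) h(5) h(3) h(6)] dM by simp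
  have RHS: "(let g = gcd g11 g22; f = gcd f11 f22; g22' = g22 div g; f22' = f22 div f in
      gcd f11 g11 = 1 \<and>
      g = xml m lam div lcm f11 f22 \<and>
      f = xml m lam div lcm g11 g22 \<and>
      gcd g22' (gcd f22' (g11 * f12 - g12 * f11)) = 1) \<longleftrightarrow>
      (gcd f11 g11 = 1 \<and> gcd g11 g22 = M div lcm f11 f22 \<and> gcd f11 f22 = M div lcm g11 g22 \<and>
       gcd (g22 div gcd g11 g22) (gcd (f22 div gcd f11 f22) (g11 * f12 - g12 * f11)) = 1)"
    unfolding M_def Let_def ..
  show ?thesis
    unfolding LCP RHS
  proof
    assume L: "A \<inter> B = {(0, 0)} \<and> Splus A B = Pd m \<times> Pd m"
    hence AB: "A \<inter> B = {(0, 0)}" and SV: "Splus A B = Pd m \<times> Pd m" by auto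
    have deg: "degree g11 + degree g22 + degree f11 + degree f22 = 2 * degree M"
      using crit AB SV dM by simp
    have Int: "\<And>r s u v. r*g11 = u*f11 \<Longrightarrow> r*g12 + s*g22 = u*f12 + v*f22 \<Longrightarrow> M dvd r*g11"
      using int_from_AB[of M g11 g12 g22 f11 f12 f22] AB unfolding A_def B_def by blast
    have one: "(1::'a poly) \<in> Pd m" "(0::'a poly) \<in> Pd m" using m_pos by (auto simp: Pd_iff)
    have "(1, 0) \<in> Splus A B" using SV one by simp
    then obtain r s u v where s1: "M dvd r*g11 + u*f11 - 1"
      unfolding A_def B_def using sum_extract by blast
    have "(0, 1) \<in> Splus A B" using SV one by simp
    then obtain r' s' u' v' where t1: "M dvd r'*g11 + u'*f11" and t2: "M dvd r'*g12 + s'*g22 + u'*f12 + v'*f22 - 1"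
      unfolding A_def B_def using sum_extract[of 0 1 M g11 g12 g22 f11 f12 f22] by auto
    have cop: "coprime g11 f11" using fwd_I[OF h(1) s1] .
    have I: "gcd f11 g11 = 1" using cop by (simp add: coprime_commute)
    have K1: "coprime (gcd g11 g22) f22" using fwd_K[OF sq h(1) h(3) cop t1 t2] .
    have t1': "M dvd u'*f11 + r'*g11" using t1 by (simp add: ac_simps)
    have t2': "M dvd u'*f12 + v'*f22 + r'*g12 + s'*g22 - 1" using t2 by (simp add: ac_simps)
    have K2: "coprime (gcd f11 f22) g22" using fwd_K[OF sq h(4) h(6) cop[unfolded coprime_commute[of g11]] t1' t2'] .
    have c1: "coprime (gcd g11 g22) f11" using cop coprime_divisors[of "gcd g11 g22" g11 f11 f11] by simp
    have c3: "coprime (gcd f11 f22) g11" using cop coprime_divisors[of "gcd f11 f22" f11 g11 g11]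
      by (simp add: coprime_commute)
    have II: "gcd g11 g22 = M div lcm f11 f22 \<and> gcd f11 f22 = M div lcm g11 g22"
      using fwd_II[OF M0 Mn h(1) h(2) h(4) h(5) c1 K1 c3 K2 deg] .
    have IV: "gcd (g22 div gcd g11 g22) (gcd (f22 div gcd f11 f22) (g11 * f12 - g12 * f11)) = 1"
      using fwd_IV[OF sq h(2) h(5) Int] .
    show "gcd f11 g11 = 1 \<and> gcd g11 g22 = M div lcm f11 f22 \<and> gcd f11 f22 = M div lcm g11 g22 \<and>
       gcd (g22 div gcd g11 g22) (gcd (f22 div gcd f11 f22) (g11 * f12 - g12 * f11)) = 1"
      using I II IV by simp
  next
    assume R: "gcd f11 g11 = 1 \<and> gcd g11 g22 = M div lcm f11 f22 \<and> gcd f11 f22 = M div lcm g11 g22 \<and>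
       gcd (g22 div gcd g11 g22) (gcd (f22 div gcd f11 f22) (g11 * f12 - g12 * f11)) = 1"
    have bw: "(\<forall>r s u v. r*g11 = u*f11 \<and> r*g12 + s*g22 = u*f12 + v*f22 \<longrightarrow> M dvd r*g11 \<and> M dvd r*g12 + s*g22)
     \<and> degree g11 + degree g22 + degree f11 + degree f22 = 2 * degree M"
      using bwd[OF sq h(1) h(2) h(4) h(5) h(3) h(6)] R by blast
    have AB: "A \<inter> B = {(0, 0)}" unfolding A_def B_def
      using AB_from_int[OF M0 h(4) h(5) h(6)] bw by blast
    moreover have "Splus A B = Pd m \<times> Pd m" using crit[OF AB] bw dM by simp
    ultimately show "A \<inter> B = {(0, 0)} \<and> Splus A B = Pd m \<times> Pd m" by simp
  qed
qed

end
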